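(* Let $(G,\circ)$ be a commutative group, $K$ a field, $t\in G$, $f:G\times G\to K$, and let $A=A_G(f,t)$. For $m\in\mathbb N$, one has $A^{[m]}=0$ if and only if $$\prod_{k=0}^{m-1}\ \prod_{s=0}^{2^{m-k-1}-1} f\Big(t^{2^k-1}\circ\prod_{q=1}^{2^k} a_{2^{k+1}s+q},\ \ t^{2^k-1}\circ\prod_{l=1}^{2^k} a_{2^{k+1}s+2^k+l}\Big)=0$$ for all $a_1,\dots,a_{2^m}\in G$ (products inside $f$ taken with respect to $\circ$). In particular, $A$ is solvable if and only if such an $m$ exists, and its index of solvability is the least such $m$.
   Context: The algebra $A_G(f,t)$ is the $K$-vector space with basis $\{e_a : a\in G\}$ and bilinear multiplication $e_a e_b = f(a,b)\, e_{a\circ b\circ t}$. The derived sequence is $A^{[0]}=A$, $A^{[k+1]}=A^{[k]}A^{[k]}$ (span of products); $A$ is solvable if $A^{[m]}=0$ for some $m$, and the least such $m$ is the index of solvability. *)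

theory Defs
  imports "HOL.Modules" "HOL-Algebra.Group" "HOL-Algebra.FiniteProduct" "HOL-Library.Function_Algebras"
begin

text \<open>The algebra A_G(f,t): elements are finitely supported functions from carrier G to the
field 'k (coordinates w.r.t. the basis e_a, a in G), with pointwise K-vector space structure.\<close>

definition supp_fn :: "('a \<Rightarrow> 'k::zero) \<Rightarrow> 'a set" where
  "supp_fn x = {a. x a \<noteq> 0}"

definition alg_carrier :: "('a, 'm) monoid_scheme \<Rightarrow> ('a \<Rightarrow> 'k::field) set" where
  "alg_carrier G = {x. finite (supp_fn x) \<and> supp_fn x \<subseteq> carrier G}"

text \<open>Bilinear extension of e_a e_b = f(a,b) e_(a o b o t).\<close>
definition alg_mult :: "('a, 'm) monoid_scheme \<Rightarrow> ('a \<Rightarrow> 'a \<Rightarrow> 'k::field) \<Rightarrow> 'a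
    \<Rightarrow> ('a \<Rightarrow> 'k) \<Rightarrow> ('a \<Rightarrow> 'k) \<Rightarrow> ('a \<Rightarrow> 'k)" where
  "alg_mult G f t x y = (\<lambda>c. \<Sum>a\<in>supp_fn x. \<Sum>b\<in>supp_fn y.
      if a \<otimes>\<^bsub>G\<^esub> b \<otimes>\<^bsub>G\<^esub> t = c then f a b * x a * y b else 0)"

definition fscale :: "'k::field \<Rightarrow> ('a \<Rightarrow> 'k) \<Rightarrow> ('a \<Rightarrow> 'k)" where
  "fscale c x = (\<lambda>a. c * x a)"

fun derived :: "('a, 'm) monoid_scheme \<Rightarrow> ('a \<Rightarrow> 'a \<Rightarrow> 'k::field) \<Rightarrow> 'a \<Rightarrow> nat
    \<Rightarrow> ('a \<Rightarrow> 'k) set" where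
  "derived G f t 0 = alg_carrier G"
| "derived G f t (Suc k) = module.span fscale
      {alg_mult G f t x y | x y. x \<in> derived G f t k \<and> y \<in> derived G f t k}"

definition alg_solvable :: "('a, 'm) monoid_scheme \<Rightarrow> ('a \<Rightarrow> 'a \<Rightarrow> 'k::field) \<Rightarrow> 'a \<Rightarrow> bool" where
  "alg_solvable G f t \<longleftrightarrow> (\<exists>m. derived G f t m = {0})"

definition solv_index :: "('a, 'm) monoid_scheme \<Rightarrow> ('a \<Rightarrow> 'a \<Rightarrow> 'k::field) \<Rightarrow> 'a \<Rightarrow> nat" where
  "solv_index G f t = (LEAST m. derived G f t m = {0})"

definition prod_cond :: "('a, 'm) monoid_scheme \<Rightarrow> ('a \<Rightarrow> 'a \<Rightarrow> 'k::field) \<Rightarrow> 'a \<Rightarrow> nat \<Rightarrow> bool" where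
  "prod_cond G f t m \<longleftrightarrow>
    (\<forall>a :: nat \<Rightarrow> 'a. (\<forall>i\<in>{1..2^m}. a i \<in> carrier G) \<longrightarrow>
      (\<Prod>k<m. \<Prod>s<2^(m-k-1).
         f (t [^]\<^bsub>G\<^esub> ((2::nat)^k - 1) \<otimes>\<^bsub>G\<^esub> finprod G (\<lambda>q. a (2^(k+1)*s + q)) {1..2^k})
           (t [^]\<^bsub>G\<^esub> ((2::nat)^k - 1) \<otimes>\<^bsub>G\<^esub> finprod G (\<lambda>l. a (2^(k+1)*s + 2^k + l)) {1..2^k}))
      = 0)"

end

theory Submission
  imports Defs
begin


lemma module_fscale: "module (fscale :: 'k::field \<Rightarrow> ('a \<Rightarrow> 'k) \<Rightarrow> ('a \<Rightarrow> 'k))"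
  by standard (auto simp: fscale_def fun_eq_iff algebra_simps)

interpretation fsm: module "fscale :: 'k::field \<Rightarrow> ('a \<Rightarrow> 'k) \<Rightarrow> ('a \<Rightarrow> 'k)"
  by (rule module_fscale)

lemma sum_fun_apply: "(\<Sum>i\<in>A. F i) c = (\<Sum>i\<in>A. F i c)"
  by (induction A rule: infinite_finite_induct) auto

lemma supp_add: "supp_fn ((x::'a \<Rightarrow> 'k::field) + y) \<subseteq> supp_fn x \<union> supp_fn y"
  by (auto simp: supp_fn_def)

lemma supp_scale: "supp_fn (fscale c x) \<subseteq> supp_fn x"
  by (auto simp: supp_fn_def fscale_def)

lemma subspace_alg_carrier: "fsm.subspace (alg_carrier G :: ('a \<Rightarrow> 'k::field) set)"
  unfolding fsm.subspace_def alg_carrier_def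
proof (intro conjI ballI allI)
  show "(0::'a\<Rightarrow>'k) \<in> {x. finite (supp_fn x) \<and> supp_fn x \<subseteq> carrier G}"
    by (simp add: supp_fn_def)
next
  fix x y :: "'a \<Rightarrow> 'k" assume "x \<in> {x. finite (supp_fn x) \<and> supp_fn x \<subseteq> carrier G}"
    "y \<in> {x. finite (supp_fn x) \<and> supp_fn x \<subseteq> carrier G}"
  then show "x + y \<in> {x. finite (supp_fn x) \<and> supp_fn x \<subseteq> carrier G}"
    using supp_add[of x y] by (auto intro: finite_subset simp: supp_fn_def)
next
  fix c :: 'k and x :: "'a \<Rightarrow> 'k" assume "x \<in> {x. finite (supp_fn x) \<and> supp_fn x \<subseteq> carrier G}"
  then show "fscale c x \<in> {x. finite (supp_fn x) \<and> supp_fn x \<subseteq> carrier G}"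
    using supp_scale[of c x] by (auto intro: finite_subset)
qed

lemma alg_mult_gen:
  assumes "finite S" "supp_fn x \<subseteq> S" "finite T" "supp_fn y \<subseteq> T"
  shows "alg_mult G f t x y = (\<lambda>c. \<Sum>a\<in>S. \<Sum>b\<in>T.
      if a \<otimes>\<^bsub>G\<^esub> b \<otimes>\<^bsub>G\<^esub> t = c then f a b * x a * y b else 0)"
proof (rule ext)
  fix c
  have fx: "finite (supp_fn x)" "finite (supp_fn y)" using assms finite_subset by auto
  have "(\<Sum>b\<in>supp_fn y. if a \<otimes>\<^bsub>G\<^esub> b \<otimes>\<^bsub>G\<^esub> t = c then f a b * x a * y b else 0)
      = (\<Sum>b\<in>T. if a \<otimes>\<^bsub>G\<^esub> b \<otimes>\<^bsub>G\<^esub> t = c then f a b * x a * y b else 0)" for a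
    by (rule sum.mono_neutral_left) (use assms in \<open>auto simp: supp_fn_def\<close>)
  then have "alg_mult G f t x y c = (\<Sum>a\<in>supp_fn x. \<Sum>b\<in>T.
      if a \<otimes>\<^bsub>G\<^esub> b \<otimes>\<^bsub>G\<^esub> t = c then f a b * x a * y b else 0)"
    by (simp add: alg_mult_def)
  also have "\<dots> = (\<Sum>a\<in>S. \<Sum>b\<in>T.
      if a \<otimes>\<^bsub>G\<^esub> b \<otimes>\<^bsub>G\<^esub> t = c then f a b * x a * y b else 0)"
    by (rule sum.mono_neutral_left) (use assms in \<open>auto simp: supp_fn_def intro!: sum.neutral split: if_splits\<close>)
  finally show "alg_mult G f t x y c = (\<Sum>a\<in>S. \<Sum>b\<in>T.
      if a \<otimes>\<^bsub>G\<^esub> b \<otimes>\<^bsub>G\<^esub> t = c then f a b * x a * y b else 0)" .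
qed

lemma alg_mult_add_left:
  assumes "x \<in> alg_carrier G" "y \<in> alg_carrier G" "z \<in> alg_carrier G"
  shows "alg_mult G f t (x + y) z = alg_mult G f t x z + alg_mult G f t y z"
proof -
  let ?S = "supp_fn x \<union> supp_fn y" and ?T = "supp_fn z"
  have fin: "finite ?S" "finite ?T" using assms by (auto simp: alg_carrier_def)
  show ?thesis
    apply (subst alg_mult_gen[OF fin(1) supp_add fin(2) order_refl])
    apply (subst alg_mult_gen[OF fin(1) _ fin(2) order_refl, where x=x], blast)
    apply (subst alg_mult_gen[OF fin(1) _ fin(2) order_refl, where x=y], blast)
    apply (simp add: fun_eq_iff sum.distrib[symmetric] algebra_simps)
    apply (intro allI sum.cong refl) by (auto simp: algebra_simps fscale_def)
qed

lemma alg_mult_add_right: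
  assumes "x \<in> alg_carrier G" "y \<in> alg_carrier G" "z \<in> alg_carrier G"
  shows "alg_mult G f t z (x + y) = alg_mult G f t z x + alg_mult G f t z y"
proof -
  let ?S = "supp_fn x \<union> supp_fn y" and ?T = "supp_fn z"
  have fin: "finite ?S" "finite ?T" using assms by (auto simp: alg_carrier_def)
  show ?thesis
    apply (subst alg_mult_gen[OF fin(2) order_refl fin(1) supp_add])
    apply (subst alg_mult_gen[OF fin(2) order_refl fin(1), where y=x], blast)
    apply (subst alg_mult_gen[OF fin(2) order_refl fin(1), where y=y], blast)
    apply (simp add: fun_eq_iff sum.distrib[symmetric] algebra_simps)
    apply (intro allI sum.cong refl) by (auto simp: algebra_simps fscale_def)
qed

lemma alg_mult_scale_left:
  assumes "x \<in> alg_carrier G" "z \<in> alg_carrier G"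
  shows "alg_mult G f t (fscale c x) z = fscale c (alg_mult G f t x z)"
proof -
  have fin: "finite (supp_fn x)" "finite (supp_fn z)" using assms by (auto simp: alg_carrier_def)
  show ?thesis
    apply (subst alg_mult_gen[OF fin(1) supp_scale fin(2) order_refl])
    apply (subst alg_mult_gen[OF fin(1) order_refl fin(2) order_refl])
    apply (simp add: fun_eq_iff fscale_def sum_distrib_left)
    apply (intro allI sum.cong refl) by (auto simp: algebra_simps fscale_def)
qed

lemma alg_mult_scale_right:
  assumes "x \<in> alg_carrier G" "z \<in> alg_carrier G"
  shows "alg_mult G f t z (fscale c x) = fscale c (alg_mult G f t z x)"
proof -
  have fin: "finite (supp_fn x)" "finite (supp_fn z)" using assms by (auto simp: alg_carrier_def)
  show ?thesis
    apply (subst alg_mult_gen[OF fin(2) order_refl fin(1) supp_scale])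
    apply (subst alg_mult_gen[OF fin(2) order_refl fin(1) order_refl])
    apply (simp add: fun_eq_iff fscale_def sum_distrib_left)
    apply (intro allI sum.cong refl) by (auto simp: algebra_simps fscale_def)
qed

lemma alg_mult_zero_left: "alg_mult G f t 0 z = 0"
  by (simp add: alg_mult_def supp_fn_def fun_eq_iff)

lemma alg_mult_zero_right: "alg_mult G f t z 0 = 0"
  by (simp add: alg_mult_def supp_fn_def fun_eq_iff)

definition ebas :: "'a \<Rightarrow> ('a \<Rightarrow> 'k::field)" where
  "ebas g = (\<lambda>x. if x = g then 1 else 0)"

lemma supp_ebas: "supp_fn (ebas g) = {g}"
  by (auto simp: supp_fn_def ebas_def)

lemma mono_mult:
  "alg_mult G f t (fscale c (ebas g)) (fscale d (ebas h)) = fscale (c*d*f g h) (ebas (g \<otimes>\<^bsub>G\<^esub> h \<otimes>\<^bsub>G\<^esub> t))"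
  apply (subst alg_mult_gen[where S="{g}" and T="{h}"])
  using supp_scale[of c "ebas g"] supp_scale[of d "ebas h"]
  by (auto simp: supp_ebas fun_eq_iff fscale_def ebas_def supp_fn_def)

lemma ebas_carrier: "g \<in> carrier G \<Longrightarrow> fscale c (ebas g) \<in> alg_carrier G"
  using supp_scale[of c "ebas g"] by (auto simp: alg_carrier_def supp_ebas intro: finite_subset)

lemma fscale_ebas_zero: "(fscale c (ebas g) = 0) \<longleftrightarrow> c = 0"
  by (auto simp: fscale_def ebas_def fun_eq_iff)

lemma span_prod:
  assumes S: "S \<subseteq> alg_carrier G"
  shows "fsm.span {alg_mult G f t x y | x y. x \<in> fsm.span S \<and> y \<in> fsm.span S}
       = fsm.span {alg_mult G f t x y | x y. x \<in> S \<and> y \<in> S}"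
proof
  let ?T = "fsm.span {alg_mult G f t x y | x y. x \<in> S \<and> y \<in> S}"
  have spS: "fsm.span S \<subseteq> alg_carrier G"
    by (rule fsm.span_minimal[OF S subspace_alg_carrier])
  have step1: "alg_mult G f t u y \<in> ?T" if u: "u \<in> S" and y: "y \<in> fsm.span S" for u y
  proof -
    have "fsm.span S \<subseteq> {y \<in> alg_carrier G. alg_mult G f t u y \<in> ?T}"
    proof (rule fsm.span_minimal)
      show "S \<subseteq> {y \<in> alg_carrier G. alg_mult G f t u y \<in> ?T}"
        using S u by (auto intro!: fsm.span_base)
      show "fsm.subspace {y \<in> alg_carrier G. alg_mult G f t u y \<in> ?T}"
        unfolding fsm.subspace_def using S u subspace_alg_carrier
        by (auto simp: alg_mult_zero_right alg_mult_add_right alg_mult_scale_right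
            fsm.span_zero fsm.span_add fsm.span_scale fsm.subspace_def)
    qed
    then show ?thesis using y by auto
  qed
  have step2: "alg_mult G f t x y \<in> ?T" if x: "x \<in> fsm.span S" and y: "y \<in> fsm.span S" for x y
  proof -
    have "fsm.span S \<subseteq> {x \<in> alg_carrier G. alg_mult G f t x y \<in> ?T}"
    proof (rule fsm.span_minimal)
      show "S \<subseteq> {x \<in> alg_carrier G. alg_mult G f t x y \<in> ?T}"
        using S y step1 by auto
      show "fsm.subspace {x \<in> alg_carrier G. alg_mult G f t x y \<in> ?T}"
        unfolding fsm.subspace_def using spS y subspace_alg_carrier
        by (auto simp: alg_mult_zero_left alg_mult_add_left alg_mult_scale_left
            fsm.span_zero fsm.span_add fsm.span_scale fsm.subspace_def)
    qed
    then show ?thesis using x by auto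
  qed
  show "fsm.span {alg_mult G f t x y | x y. x \<in> fsm.span S \<and> y \<in> fsm.span S} \<subseteq> ?T"
    by (rule fsm.span_minimal) (use step2 in auto)
  show "?T \<subseteq> fsm.span {alg_mult G f t x y | x y. x \<in> fsm.span S \<and> y \<in> fsm.span S}"
    by (rule fsm.span_mono) (use fsm.span_base in blast)
qed

lemma alg_carrier_span: "(alg_carrier G :: ('a \<Rightarrow> 'k::field) set) = fsm.span {fscale 1 (ebas g) | g. g \<in> carrier G}"
proof
  show "fsm.span {fscale 1 (ebas g) | g. g \<in> carrier G} \<subseteq> alg_carrier G"
    by (rule fsm.span_minimal[OF _ subspace_alg_carrier]) (use ebas_carrier[where c=1] in auto)
  show "alg_carrier G \<subseteq> fsm.span {fscale 1 (ebas g) | g. g \<in> carrier G}"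
  proof
    fix x assume x: "x \<in> alg_carrier G"
    have "x = (\<Sum>a\<in>supp_fn x. fscale (x a) (fscale 1 (ebas a)))"
    proof (rule ext)
      fix c
      have "(\<Sum>a\<in>supp_fn x. fscale (x a) (fscale 1 (ebas a))) c
          = (\<Sum>a\<in>supp_fn x. if a = c then x a else 0)"
        by (simp add: sum_fun_apply fscale_def ebas_def eq_commute if_distrib cong: if_cong)
      also have "\<dots> = x c"
        using x by (auto simp: sum.delta' alg_carrier_def supp_fn_def)
      finally show "x c = (\<Sum>a\<in>supp_fn x. fscale (x a) (fscale 1 (ebas a))) c" by simp
    qed
    also have "\<dots> \<in> fsm.span {fscale 1 (ebas g) | g. g \<in> carrier G}"
      proof (rule fsm.span_sum)
      fix a assume "a \<in> supp_fn x"
      then have "a \<in> carrier G" using x by (auto simp: alg_carrier_def)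
      then have "fscale 1 (ebas a) \<in> {fscale 1 (ebas g) | g. g \<in> carrier G}" by blast
      then show "fscale (x a) (fscale 1 (ebas a)) \<in> fsm.span {fscale 1 (ebas g) | g. g \<in> carrier G}"
        by (intro fsm.span_scale fsm.span_base)
    qed
    finally show "x \<in> fsm.span {fscale 1 (ebas g) | g. g \<in> carrier G}" .
  qed
qed



definition hh :: "('a, 'm) monoid_scheme \<Rightarrow> 'a \<Rightarrow> nat \<Rightarrow> (nat \<Rightarrow> 'a) \<Rightarrow> 'a" where
  "hh G t k a = t [^]\<^bsub>G\<^esub> ((2::nat)^k - 1) \<otimes>\<^bsub>G\<^esub> finprod G a {1..2^k}"

definition shift :: "nat \<Rightarrow> (nat \<Rightarrow> 'a) \<Rightarrow> nat \<Rightarrow> 'a" where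
  "shift k a = (\<lambda>i. a (2^k + i))"

definition FF :: "('a, 'm) monoid_scheme \<Rightarrow> ('a \<Rightarrow> 'a \<Rightarrow> 'k::field) \<Rightarrow> 'a \<Rightarrow> nat \<Rightarrow> nat \<Rightarrow> (nat \<Rightarrow> 'a) \<Rightarrow> 'k" where
  "FF G f t k s a = f (hh G t k (\<lambda>q. a (2^(k+1)*s + q))) (hh G t k (\<lambda>l. a (2^(k+1)*s + 2^k + l)))"

definition QQ :: "('a, 'm) monoid_scheme \<Rightarrow> ('a \<Rightarrow> 'a \<Rightarrow> 'k::field) \<Rightarrow> 'a \<Rightarrow> nat \<Rightarrow> (nat \<Rightarrow> 'a) \<Rightarrow> 'k" where
  "QQ G f t m a = (\<Prod>k<m. \<Prod>s<2^(m-k-1). FF G f t k s a)"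

lemma prod_cond_QQ: "prod_cond G f t m \<longleftrightarrow>
   (\<forall>a. (\<forall>i\<in>{1..2^m}. a i \<in> carrier G) \<longrightarrow> QQ G f t m a = 0)"
  unfolding prod_cond_def QQ_def FF_def hh_def by (rule refl)

lemma prod_double: "(\<Prod>s<n+n. F s) = (\<Prod>s<n. F s) * (\<Prod>s<n. F (n+s::nat))"
proof -
  have "(\<Prod>s<n+n. F s) = (\<Prod>s\<in>{0..<n}. F s) * (\<Prod>s\<in>{n..<n+n}. F s)"
    by (simp add: prod.atLeastLessThan_concat lessThan_atLeast0)
  also have "(\<Prod>s\<in>{n..<n+n}. F s) = (\<Prod>s\<in>{0..<n}. F (n+s))"
    using prod.shift_bounds_nat_ivl[of F 0 n n] by (simp add: add.commute)
  finally show ?thesis by (simp add: lessThan_atLeast0)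
qed

lemma FF_shift:
  assumes "k < m"
  shows "FF G f t k (2^(m-k-1) + s) a = FF G f t k s (shift m a)"
proof -
  have e0: "(2::nat)^(k+1) * 2^(m-k-1) = 2^(k+1+(m-k-1))" by (simp only: power_add)
  have e1: "k+1+(m-k-1) = m" using assms by simp
  have e: "(2::nat)^(k+1) * 2^(m-k-1) = 2^m" using e0 unfolding e1 .
  have "2^(k+1) * (2^(m-k-1) + s) + q = 2^m + (2^(k+1) * s + q)" for q :: nat
    by (simp only: distrib_left e add.assoc)
  then show ?thesis unfolding FF_def shift_def by (simp add: add.assoc)
qed

lemma QQ_Suc: "QQ G f t (Suc m) a = QQ G f t m a * QQ G f t m (shift m a)
     * f (hh G t m a) (hh G t m (shift m a))"
proof -
  have "QQ G f t (Suc m) a = (\<Prod>k<m. \<Prod>s<2^(m-k). FF G f t k s a) * FF G f t m 0 a"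
    unfolding QQ_def by simp
  also have "(\<Prod>k<m. \<Prod>s<2^(m-k). FF G f t k s a)
     = (\<Prod>k<m. (\<Prod>s<2^(m-k-1). FF G f t k s a) * (\<Prod>s<2^(m-k-1). FF G f t k s (shift m a)))"
  proof (rule prod.cong[OF refl])
    fix k assume "k \<in> {..<m}"
    then have km: "k < m" by simp
    then have "(2::nat)^(m-k) = 2^(m-k-1) + 2^(m-k-1)"
      by (metis Suc_diff_Suc diff_Suc_1 mult_2 power_Suc)
    then show "(\<Prod>s<2^(m-k). FF G f t k s a)
       = (\<Prod>s<2^(m-k-1). FF G f t k s a) * (\<Prod>s<2^(m-k-1). FF G f t k s (shift m a))"
      by (simp only: prod_double FF_shift[OF km])
  qed
  also have "\<dots> = QQ G f t m a * QQ G f t m (shift m a)"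
    unfolding QQ_def by (rule prod.distrib)
  also have "FF G f t m 0 a = f (hh G t m a) (hh G t m (shift m a))"
    unfolding FF_def shift_def by (simp add: add.commute)
  finally show ?thesis .
qed

lemma QQ_0: "QQ G f t 0 a = 1"
  by (simp add: QQ_def)

context comm_group
begin

lemma hh_closed:
  assumes "t \<in> carrier G" "\<forall>i\<in>{1..2^k}. a i \<in> carrier G"
  shows "hh G t k a \<in> carrier G"
  using assms unfolding hh_def by (auto intro!: finprod_closed)

lemma hh_cong:
  assumes "\<forall>i\<in>{1..2^k}. a i = b i" "\<forall>i\<in>{1..2^k}. b i \<in> carrier G"
  shows "hh G t k a = hh G t k b"
proof -
  have "finprod G a {1..2^k} = finprod G b {1..2^k}"
    by (rule finprod_cong') (use assms in auto)
  then show ?thesis unfolding hh_def by simp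
qed

lemma hh_0:
  assumes "a 1 \<in> carrier G"
  shows "hh G t 0 a = a 1"
  using assms unfolding hh_def by simp

lemma hh_Suc:
  assumes t: "t \<in> carrier G" and a: "\<forall>i\<in>{1..2^Suc k}. a i \<in> carrier G"
  shows "hh G t (Suc k) a = hh G t k a \<otimes> hh G t k (shift k a) \<otimes> t"
proof -
  let ?n = "(2::nat)^k"
  have n1: "?n \<ge> 1" by simp
  have un: "{1..?n+?n} = {1..?n} \<union> (\<lambda>i. ?n + i) ` {1..?n}"
    by (auto simp: image_iff intro!: bexI[where x="x - 2^k" for x])
  have dis: "{1..?n} \<inter> (\<lambda>i. ?n + i) ` {1..?n} = {}" by auto
  have a1: "a \<in> {1..?n} \<rightarrow> carrier G" and a2: "a \<in> (\<lambda>i. ?n + i) ` {1..?n} \<rightarrow> carrier G"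
    using a by auto
  have fp: "finprod G a {1..2^Suc k} = finprod G a {1..?n} \<otimes> finprod G (shift k a) {1..?n}"
  proof -
    have "finprod G a {1..2^Suc k} = finprod G a ({1..?n} \<union> (\<lambda>i. ?n + i) ` {1..?n})"
    proof -
      have p2: "(2::nat)^Suc k = ?n + ?n" by simp
      show ?thesis unfolding p2 un by (rule refl)
    qed
    also have "\<dots> = finprod G a {1..?n} \<otimes> finprod G a ((\<lambda>i. ?n + i) ` {1..?n})"
      by (rule finprod_Un_disjoint[OF _ _ dis a1 a2]) auto
    also have "finprod G a ((\<lambda>i. ?n + i) ` {1..?n}) = finprod G (shift k a) {1..?n}"
      unfolding shift_def by (rule finprod_reindex[OF a2]) auto
    finally show ?thesis .
  qed
  have pw: "(2::nat)^Suc k - 1 = (?n - 1) + (?n - 1) + 1" using n1 unfolding power_Suc by linarith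
  have c1: "finprod G a {1..?n} \<in> carrier G" using a1 by simp
  have c2: "finprod G (shift k a) {1..?n} \<in> carrier G"
    using a2 unfolding shift_def by (auto intro!: finprod_closed)
  have "t [^] ((2::nat)^Suc k - 1) = t [^] (?n - 1) \<otimes> t [^] (?n - 1) \<otimes> t"
  proof -
    have "t [^] ((?n - 1) + (?n - 1) + 1) = t [^] ((?n - 1) + (?n - 1)) \<otimes> t"
      unfolding Suc_eq_plus1[symmetric] by (rule nat_pow_Suc)
    also have "t [^] ((?n - 1) + (?n - 1)) = t [^] (?n - 1) \<otimes> t [^] (?n - 1)"
      using t by (rule nat_pow_mult[symmetric])
    finally show ?thesis unfolding pw .
  qed
  then show ?thesis unfolding hh_def fp using t c1 c2
    by (simp add: m_ac)
qed

lemma QQ_cong: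
  assumes "t \<in> carrier G" "\<forall>i\<in>{1..2^k}. a i = b i" "\<forall>i\<in>{1..2^k}. b i \<in> carrier G"
  shows "QQ G f t k a = QQ G f t k b"
  using assms(2,3)
proof (induction k arbitrary: a b)
  case 0
  then show ?case by (simp add: QQ_0)
next
  case (Suc k)
  have s1: "\<forall>i\<in>{1..2^k}. a i = b i" "\<forall>i\<in>{1..2^k}. b i \<in> carrier G"
    using Suc.prems by auto
  have s2: "\<forall>i\<in>{1..2^k}. shift k a i = shift k b i" "\<forall>i\<in>{1..2^k}. shift k b i \<in> carrier G"
    using Suc.prems by (auto simp: shift_def)
  show ?case
    by (simp add: QQ_Suc Suc.IH[OF s1] Suc.IH[OF s2] hh_cong[OF s1] hh_cong[OF s2])
qed

end



definition MM :: "('a, 'm) monoid_scheme \<Rightarrow> ('a \<Rightarrow> 'a \<Rightarrow> 'k::field) \<Rightarrow> 'a \<Rightarrow> nat \<Rightarrow> ('a \<Rightarrow> 'k) set" where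
  "MM G f t k = {fscale (QQ G f t k a) (ebas (hh G t k a)) | a. \<forall>i\<in>{1..2^k}. a i \<in> carrier G}"

context comm_group
begin

lemma MM_carrier:
  assumes "t \<in> carrier G"
  shows "MM G f t k \<subseteq> alg_carrier G"
  using assms by (auto simp: MM_def intro!: ebas_carrier hh_closed)

lemma MM_0: "MM G f t 0 = {fscale 1 (ebas g) | g. g \<in> carrier G}"
proof -
  have "\<exists>a. fscale 1 (ebas g) = fscale (QQ G f t 0 a) (ebas (hh G t 0 a)) \<and> a 1 \<in> carrier G"
    if "g \<in> carrier G" for g
    using that by (intro exI[of _ "\<lambda>_. g"]) (simp add: QQ_0 hh_0)
  then show ?thesis unfolding MM_def by (auto simp: QQ_0 hh_0)
qed

lemma MM_Suc:
  assumes t: "t \<in> carrier G"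
  shows "{alg_mult G f t x y | x y. x \<in> MM G f t k \<and> y \<in> MM G f t k} = MM G f t (Suc k)"
proof
  show "{alg_mult G f t x y | x y. x \<in> MM G f t k \<and> y \<in> MM G f t k} \<subseteq> MM G f t (Suc k)"
  proof clarify
    fix x y assume "x \<in> MM G f t k" "y \<in> MM G f t k"
    then obtain a b where x: "x = fscale (QQ G f t k a) (ebas (hh G t k a))"
        and a: "\<forall>i\<in>{1..2^k}. a i \<in> carrier G"
        and y: "y = fscale (QQ G f t k b) (ebas (hh G t k b))"
        and b: "\<forall>i\<in>{1..2^k}. b i \<in> carrier G"
      unfolding MM_def by blast
    define c where "c = (\<lambda>i. if i \<le> 2^k then a i else b (i - 2^k))"
    have c: "\<forall>i\<in>{1..2^Suc k}. c i \<in> carrier G"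
    proof
      fix i :: nat assume i: "i \<in> {1..2^Suc k}"
      show "c i \<in> carrier G"
      proof (cases "i \<le> 2^k")
        case True then show ?thesis using a i by (auto simp: c_def)
      next
        case False
        then have "i - 2^k \<in> {1..2^k}" using i by auto
        then show ?thesis using b False by (auto simp: c_def)
      qed
    qed
    have ca: "\<forall>i\<in>{1..2^k}. c i = a i" by (auto simp: c_def)
    have cb: "\<forall>i\<in>{1..2^k}. shift k c i = b i" by (auto simp: c_def shift_def)
    have "alg_mult G f t x y = fscale (QQ G f t (Suc k) c) (ebas (hh G t (Suc k) c))"
      unfolding x y mono_mult QQ_Suc hh_Suc[OF t c]
        QQ_cong[OF t ca a, where f=f] QQ_cong[OF t cb b, where f=f] hh_cong[OF ca a, where t=t]
        hh_cong[OF cb b, where t=t] by (rule refl)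
    then show "alg_mult G f t x y \<in> MM G f t (Suc k)"
      unfolding MM_def using c by blast
  qed
  show "MM G f t (Suc k) \<subseteq> {alg_mult G f t x y | x y. x \<in> MM G f t k \<and> y \<in> MM G f t k}"
  proof
    fix z assume "z \<in> MM G f t (Suc k)"
    then obtain c where z: "z = fscale (QQ G f t (Suc k) c) (ebas (hh G t (Suc k) c))"
        and c: "\<forall>i\<in>{1..2^Suc k}. c i \<in> carrier G"
      unfolding MM_def by blast
    have a: "\<forall>i\<in>{1..2^k}. c i \<in> carrier G" using c by auto
    have b: "\<forall>i\<in>{1..2^k}. shift k c i \<in> carrier G" using c by (auto simp: shift_def)
    have "z = alg_mult G f t (fscale (QQ G f t k c) (ebas (hh G t k c)))
                (fscale (QQ G f t k (shift k c)) (ebas (hh G t k (shift k c))))"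
      unfolding z mono_mult QQ_Suc hh_Suc[OF t c] by (rule refl)
    moreover have "fscale (QQ G f t k c) (ebas (hh G t k c)) \<in> MM G f t k"
      unfolding MM_def using a by blast
    moreover have "fscale (QQ G f t k (shift k c)) (ebas (hh G t k (shift k c))) \<in> MM G f t k"
      unfolding MM_def using b by blast
    ultimately show "z \<in> {alg_mult G f t x y | x y. x \<in> MM G f t k \<and> y \<in> MM G f t k}"
      by blast
  qed
qed

lemma derived_span:
  assumes t: "t \<in> carrier G"
  shows "derived G f t k = fsm.span (MM G f t k)"
proof (induction k)
  case 0
  then show ?case by (simp add: MM_0 alg_carrier_span)
next
  case (Suc k)
  show ?case
    by (simp add: Suc.IH span_prod[OF MM_carrier[OF t]] MM_Suc[OF t])
qed

lemma derived_zero_iff: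
  assumes t: "t \<in> carrier G"
  shows "derived G f t m = {0} \<longleftrightarrow> prod_cond G f t m"
proof -
  have ds: "derived G f t m = fsm.span (MM G f t m)" by (rule derived_span[OF t])
  have "derived G f t m = {0} \<longleftrightarrow> MM G f t m \<subseteq> {0}"
  proof
    assume asm: "derived G f t m = {0}"
    have sp: "fsm.span (MM G f t m) = {0}" using trans[OF ds[symmetric] asm] .
    show "MM G f t m \<subseteq> {0}"
      using fsm.span_superset[of "MM G f t m"] unfolding sp .
  next
    assume "MM G f t m \<subseteq> {0}"
    then have "fsm.span (MM G f t m) \<subseteq> {0}"
      by (rule fsm.span_minimal) simp
    then have "fsm.span (MM G f t m) = {0}"
      using fsm.span_zero[of "MM G f t m"] by auto
    then show "derived G f t m = {0}" unfolding ds .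
  qed
  also have "\<dots> \<longleftrightarrow> prod_cond G f t m"
    unfolding prod_cond_QQ
  proof (intro iffI allI impI)
    fix a :: "nat \<Rightarrow> 'a" assume M: "MM G f t m \<subseteq> {0}" and a: "\<forall>i\<in>{1..2^m}. a i \<in> carrier G"
    then have "fscale (QQ G f t m a) (ebas (hh G t m a)) \<in> MM G f t m"
      unfolding MM_def by blast
    then have "fscale (QQ G f t m a) (ebas (hh G t m a)) = 0" using M by auto
    then show "QQ G f t m a = 0" by (simp add: fscale_ebas_zero)
  next
    assume H: "\<forall>a. (\<forall>i\<in>{1..2^m}. a i \<in> carrier G) \<longrightarrow> QQ G f t m a = 0"
    show "MM G f t m \<subseteq> {0}"
    proof
      fix z assume "z \<in> MM G f t m"
      then obtain a where z: "z = fscale (QQ G f t m a) (ebas (hh G t m a))"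
        and a: "\<forall>i\<in>{1..2^m}. a i \<in> carrier G" unfolding MM_def by blast
      have "QQ G f t m a = 0" using H a by blast
      then show "z \<in> {0}" unfolding z by (simp add: fscale_ebas_zero)
    qed
  qed
  finally show ?thesis .
qed

end

theorem proposition3p2:
  fixes G :: "('a, 'm) monoid_scheme" and f :: "'a \<Rightarrow> 'a \<Rightarrow> 'k::field" and t :: 'a
  assumes "comm_group G" and "t \<in> carrier G"
  shows "(\<forall>m. derived G f t m = {0} \<longleftrightarrow> prod_cond G f t m)
    \<and> (alg_solvable G f t \<longleftrightarrow> (\<exists>m. prod_cond G f t m))
    \<and> (alg_solvable G f t \<longrightarrow> solv_index G f t = (LEAST m. prod_cond G f t m))"
proof -
  have e: "\<And>m. derived G f t m = {0} \<longleftrightarrow> prod_cond G f t m"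
    using comm_group.derived_zero_iff[OF assms] .
  then show ?thesis
    unfolding alg_solvable_def solv_index_def by simp
qed

end
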